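(* Let $k$ be a binary kernel on a non-empty set $\mathcal X$. Then the relation $\sim_k$ is a partial equivalence relation, i.e., it is (i) symmetric and (ii) transitive.
   Context: A kernel on $\mathcal X$ is a symmetric positive semidefinite function $k:\mathcal X\times\mathcal X\to\mathbb R$. A kernel $k$ is binary if $k(x,y)\in\{0,1\}$ for all $x,y\in\mathcal X$. The relation induced by a binary kernel $k$ is $\sim_k=\{(x,y)\in\mathcal X\times\mathcal X : k(x,y)=1\}$. *)

theory Defs
  imports Complex_Main
begin

definition is_kernel :: "'a set \<Rightarrow> ('a \<Rightarrow> 'a \<Rightarrow> real) \<Rightarrow> bool" where
  "is_kernel X k \<longleftrightarrow>
     (\<forall>x\<in>X. \<forall>y\<in>X. k x y = k y x) \<and>
     (\<forall>n::nat. \<forall>xs::nat \<Rightarrow> 'a. \<forall>c::nat \<Rightarrow> real.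
        (\<forall>i<n. xs i \<in> X) \<longrightarrow>
        0 \<le> (\<Sum>i<n. \<Sum>j<n. c i * c j * k (xs i) (xs j)))"

definition binary_kernel :: "'a set \<Rightarrow> ('a \<Rightarrow> 'a \<Rightarrow> real) \<Rightarrow> bool" where
  "binary_kernel X k \<longleftrightarrow> is_kernel X k \<and> (\<forall>x\<in>X. \<forall>y\<in>X. k x y \<in> {0, 1})"

definition induced_rel :: "'a set \<Rightarrow> ('a \<Rightarrow> 'a \<Rightarrow> real) \<Rightarrow> ('a \<times> 'a) set" where
  "induced_rel X k = {(x, y). x \<in> X \<and> y \<in> X \<and> k x y = 1}"

end

theory Submission
  imports Defs
begin

theorem lemma2:
  fixes X :: "'a set" and k :: "'a \<Rightarrow> 'a \<Rightarrow> real"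
  assumes "X \<noteq> {}"
    and "binary_kernel X k"
  shows "sym (induced_rel X k) \<and> trans (induced_rel X k)"
proof
  have sy: "\<forall>x\<in>X. \<forall>y\<in>X. k x y = k y x"
    using assms(2) unfolding binary_kernel_def is_kernel_def by blast
  have psd: "\<And>(n::nat) xs (c::nat\<Rightarrow>real). (\<forall>i<n. xs i \<in> X) \<Longrightarrow> 0 \<le> (\<Sum>i<n. \<Sum>j<n. c i * c j * k (xs i) (xs j))"
    using assms(2) unfolding binary_kernel_def is_kernel_def by (meson)
  have bin: "\<forall>x\<in>X. \<forall>y\<in>X. k x y \<in> {0, 1}"
    using assms(2) unfolding binary_kernel_def by blast
  show "sym (induced_rel X k)" unfolding sym_def induced_rel_def using sy by auto
  show "trans (induced_rel X k)" unfolding trans_def induced_rel_def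
  proof (clarsimp)
    fix x y z assume xyz: "x \<in> X" "y \<in> X" "z \<in> X" and h: "k x y = 1" "k y z = 1"
    show "k x z = 1"
    proof (rule ccontr)
      assume "k x z \<noteq> 1"
      hence "k x z = 0" using bin xyz by auto
      have "0 \<le> (\<Sum>i<3. \<Sum>j<3. (\<lambda>i::nat. if i = 1 then -1 else (1::real)) i
             * (\<lambda>i::nat. if i = 1 then -1 else (1::real)) j
             * k ((\<lambda>i::nat. if i = 0 then x else if i = 1 then y else z) i)
                 ((\<lambda>i::nat. if i = 0 then x else if i = 1 then y else z) j))"
        by (rule psd) (use xyz in auto)
      hence "0 \<le> k x x + k y y + k z z - 2 * k x y + 2 * k x z - 2 * k y z"
        using sy xyz by (simp add: numeral_3_eq_3 lessThan_Suc)
      moreover have "k x x \<le> 1" "k y y \<le> 1" "k z z \<le> 1" using bin xyz by fastforce+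
      ultimately show False using h \<open>k x z = 0\<close> by linarith
    qed
  qed
qed

end
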